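(* Let $\mathcal C\subseteq\mathbf F_q^n$ be a nonzero linear code of dimension $k$ and minimum distance $d$. Then $$s(\mathcal C)=\begin{cases}k & \text{if } 2d\ge n+2,\\ k-\min\{\Delta_{d-1},\dots,\Delta_{n-d+1}\} & \text{otherwise.}\end{cases}$$
   Context: The coordinate order of $\mathcal C$ is fixed. Define $\mathcal P_0=\mathcal F_n=0$, $\mathcal P_n=\mathcal F_0=\mathcal C$, and for $1\le i\le n-1$, $\mathcal P_i=\{(c_1,\dots,c_i):(c_1,\dots,c_i,0,\dots,0)\in\mathcal C\}$ and $\mathcal F_i=\{(c_{i+1},\dots,c_n):(0,\dots,0,c_{i+1},\dots,c_n)\in\mathcal C\}$. Put $\Delta_i=\dim\mathcal P_i+\dim\mathcal F_i$. The state complexity of $\mathcal C$ (that of its minimal trellis) is $s(\mathcal C)=k-\min_{0\le i\le n}\Delta_i$. *)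

theory Defs
  imports Complex_Main "HOL-Library.Function_Algebras"
begin

text \<open>Vectors of F_q^n are represented as functions nat => 'a that vanish
at every index >= n; coordinate c_(j+1) of the paper is v j (0-based).\<close>

definition fvec :: "nat \<Rightarrow> (nat \<Rightarrow> 'a::zero) set" where
  "fvec n = {v. \<forall>j\<ge>n. v j = 0}"

definition cscale :: "'a::field \<Rightarrow> (nat \<Rightarrow> 'a) \<Rightarrow> (nat \<Rightarrow> 'a)" where
  "cscale c v = (\<lambda>j. c * v j)"

definition linear_code :: "nat \<Rightarrow> (nat \<Rightarrow> 'a::{field,finite}) set \<Rightarrow> bool" where
  "linear_code n C \<longleftrightarrow> C \<subseteq> fvec n \<and> Modules.module.subspace cscale C"

definition code_dim :: "(nat \<Rightarrow> 'a::field) set \<Rightarrow> nat" where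
  "code_dim C = Vector_Spaces.vector_space.dim cscale C"

definition hamming_dist :: "nat \<Rightarrow> (nat \<Rightarrow> 'a::zero) \<Rightarrow> (nat \<Rightarrow> 'a) \<Rightarrow> nat" where
  "hamming_dist n x y = card {j. j < n \<and> x j \<noteq> y j}"

definition min_dist :: "nat \<Rightarrow> (nat \<Rightarrow> 'a::zero) set \<Rightarrow> nat" where
  "min_dist n C = Min {hamming_dist n x y | x y. x \<in> C \<and> y \<in> C \<and> x \<noteq> y}"

definition past_code :: "nat \<Rightarrow> (nat \<Rightarrow> 'a::zero) set \<Rightarrow> nat \<Rightarrow> (nat \<Rightarrow> 'a) set" where
  "past_code n C i =
     (if i = 0 then {0} else if i = n then C
      else {(\<lambda>j. if j < i then c j else 0) | c. c \<in> C \<and> (\<forall>j. i \<le> j \<and> j < n \<longrightarrow> c j = 0)})"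

definition future_code :: "nat \<Rightarrow> (nat \<Rightarrow> 'a::zero) set \<Rightarrow> nat \<Rightarrow> (nat \<Rightarrow> 'a) set" where
  "future_code n C i =
     (if i = n then {0} else if i = 0 then C
      else {(\<lambda>j. if j < n - i then c (j + i) else 0) | c. c \<in> C \<and> (\<forall>j<i. c j = 0)})"

definition Delta :: "nat \<Rightarrow> (nat \<Rightarrow> 'a::field) set \<Rightarrow> nat \<Rightarrow> nat" where
  "Delta n C i = code_dim (past_code n C i) + code_dim (future_code n C i)"

definition state_complexity :: "nat \<Rightarrow> (nat \<Rightarrow> 'a::field) set \<Rightarrow> nat" where
  "state_complexity n C = code_dim C - Min {Delta n C i | i. i \<le> n}"

end

theory Submission
  imports Defs
begin

lemma vs: "vector_space (cscale :: 'a::field \<Rightarrow> (nat \<Rightarrow> 'a) \<Rightarrow> _)"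
  by unfold_locales (auto simp: cscale_def fun_eq_iff algebra_simps)

definition GG :: "(nat \<Rightarrow> 'a::zero) set \<Rightarrow> nat \<Rightarrow> (nat \<Rightarrow> 'a) set" where
  "GG C i = {c\<in>C. \<forall>j<i. c j = 0}"
definition PP :: "(nat \<Rightarrow> 'a::zero) set \<Rightarrow> nat \<Rightarrow> (nat \<Rightarrow> 'a) set" where
  "PP C i = {c\<in>C. \<forall>j. i \<le> j \<longrightarrow> c j = 0}"
definition sh :: "nat \<Rightarrow> nat \<Rightarrow> (nat \<Rightarrow> 'a::zero) \<Rightarrow> (nat \<Rightarrow> 'a)" where
  "sh n i c = (\<lambda>j. if j < n - i then c (j + i) else 0)"

lemma vanish_ge: "c \<in> fvec n \<Longrightarrow> (\<forall>j. i \<le> j \<and> j < n \<longrightarrow> c j = 0) \<longleftrightarrow> (\<forall>j. i \<le> j \<longrightarrow> c j = 0)"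
  unfolding fvec_def by (metis (mono_tags, lifting) mem_Collect_eq not_le)

lemma past_eq:
  assumes "C \<subseteq> fvec n" "0 \<in> C" "i \<le> n"
  shows "past_code n C i = PP C i"
proof (cases "i = 0")
  case True
  then show ?thesis using assms by (auto simp: past_code_def PP_def fun_eq_iff)
next
  case i0: False
  show ?thesis
  proof (cases "i = n")
    case True
    then show ?thesis using assms i0 by (auto simp: past_code_def PP_def fvec_def)
  next
    case False
    have tr: "(\<lambda>j. if j < i then c j else 0) = c" if "\<forall>j. i \<le> j \<longrightarrow> c j = 0" for c :: "nat \<Rightarrow> 'a"
      using that by (auto simp: fun_eq_iff)
    have "past_code n C i = {(\<lambda>j. if j < i then c j else 0) | c. c \<in> C \<and> (\<forall>j. i \<le> j \<and> j < n \<longrightarrow> c j = 0)}"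
      using i0 False by (simp add: past_code_def)
    also have "\<dots> = {(\<lambda>j. if j < i then c j else 0) | c. c \<in> C \<and> (\<forall>j. i \<le> j \<longrightarrow> c j = 0)}"
      using vanish_ge assms(1) by blast
    also have "\<dots> = {c. c \<in> C \<and> (\<forall>j. i \<le> j \<longrightarrow> c j = 0)}"
      using tr by force
    finally show ?thesis by (simp add: PP_def)
  qed
qed

lemma fut_eq:
  assumes "C \<subseteq> fvec n" "0 \<in> C" "i \<le> n"
  shows "future_code n C i = sh n i ` GG C i"
proof (cases "i = n")
  case True
  have "GG C i = {0}"
  proof
    show "GG C i \<subseteq> {0}"
    proof
      fix c assume c: "c \<in> GG C i"
      have "c j = 0" for j
      proof (cases "j < n")
        case True then show ?thesis using c \<open>i = n\<close> by (simp add: GG_def)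
      next
        case False then show ?thesis using c assms(1) by (auto simp: GG_def fvec_def)
      qed
      then show "c \<in> {0}" by (simp add: fun_eq_iff)
    qed
  qed (use assms(2) in \<open>simp add: GG_def\<close>)
  then show ?thesis using True by (simp add: future_code_def sh_def fun_eq_iff zero_fun_def)
next
  case False
  show ?thesis
  proof (cases "i = 0")
    case True
    have s0: "sh n 0 c = c" if "c \<in> C" for c
      using that assms(1) by (auto simp: sh_def fvec_def fun_eq_iff)
    have "sh n 0 ` C = C"
    proof
      show "sh n 0 ` C \<subseteq> C" using s0 by auto
      show "C \<subseteq> sh n 0 ` C" using s0 by (metis image_eqI subsetI)
    qed
    then show ?thesis using True False by (simp add: future_code_def GG_def)
  next
    case i0: False
    show ?thesis using False i0 unfolding future_code_def GG_def sh_def by auto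
  qed
qed

lemma md: "module (cscale :: 'a::field \<Rightarrow> (nat \<Rightarrow> 'a) \<Rightarrow> _)"
  by unfold_locales (auto simp: cscale_def fun_eq_iff algebra_simps)

lemma GG_sub:
  assumes "Modules.module.subspace cscale C"
  shows "Modules.module.subspace cscale (GG C i)"
  using assms by (simp add: module.subspace_def[OF md] GG_def) (auto simp: cscale_def)

lemma PP_sub:
  assumes "Modules.module.subspace cscale C"
  shows "Modules.module.subspace cscale (PP C i)"
  using assms by (simp add: module.subspace_def[OF md] PP_def) (auto simp: cscale_def)

lemma dim_fut:
  assumes "C \<subseteq> fvec n" "Modules.module.subspace cscale (C :: (nat \<Rightarrow> 'a::field) set)" "i \<le> n"
  shows "code_dim (future_code n C i) = code_dim (GG C i)"
proof -
  have m: "module (cscale :: 'a \<Rightarrow> _)" by (rule md)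
  have z: "0 \<in> C" using assms(2) m by (simp add: module.subspace_def)
  have lin: "Vector_Spaces.linear (cscale :: 'a \<Rightarrow> _) cscale (sh n i)"
    unfolding Vector_Spaces.linear_iff using vs by (auto simp: sh_def cscale_def fun_eq_iff algebra_simps)
  have sp: "Modules.module.span cscale (GG C i) = GG C i"
    using module.span_eq_iff[OF m] GG_sub[OF assms(2)] by simp
  have inj: "inj_on (sh n i) (GG C i)"
  proof
    fix x y assume x: "x \<in> GG C i" and y: "y \<in> GG C i" and e: "sh n i x = sh n i y"
    show "x = y"
    proof
      fix j
      show "x j = y j"
      proof (cases "j < i")
        case True then show ?thesis using x y by (auto simp: GG_def)
      next
        case False
        show ?thesis
        proof (cases "j < n")
          case True
          have "sh n i x (j - i) = sh n i y (j - i)" using e by simp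
          moreover have "j - i < n - i" "j - i + i = j" using True False by arith+
          ultimately show ?thesis by (simp add: sh_def)
        next
          case False
          have "x \<in> fvec n" "y \<in> fvec n" using x y assms(1) by (auto simp: GG_def)
          then show ?thesis using False by (simp add: fvec_def)
        qed
      qed
    qed
  qed
  have vp: "vector_space_pair (cscale :: 'a \<Rightarrow> _) cscale"
    using vs by (simp add: vector_space_pair_def)
  obtain B where B: "B \<subseteq> GG C i" "\<not> module.dependent cscale B" "GG C i \<subseteq> module.span cscale B"
     "card B = vector_space.dim cscale (GG C i)"
    using vector_space.basis_exists[OF vs, of "GG C i"] by blast
  have spB: "module.span cscale B \<subseteq> GG C i"
    using module.span_minimal[OF m B(1) GG_sub[OF assms(2)]] .
  have injB: "inj_on (sh n i) (module.span cscale B)" using inj spB inj_on_subset by blast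
  have indep: "\<not> module.dependent cscale (sh n i ` B)"
    using vector_space_pair.linear_independent_injective_image[OF vp lin B(2) injB] .
  have spi: "module.span cscale (sh n i ` B) = sh n i ` module.span cscale B"
    using vector_space_pair.linear_span_image[OF vp lin] .
  have c: "card (sh n i ` B) = card B"
    using card_image inj_on_subset[OF injB module.span_superset[OF m]] by blast
  have "vector_space.dim cscale (sh n i ` GG C i) = card B"
  proof (rule vector_space.dim_unique[OF vs])
    show "sh n i ` B \<subseteq> sh n i ` GG C i" using B(1) by (rule image_mono)
    show "sh n i ` GG C i \<subseteq> module.span cscale (sh n i ` B)" unfolding spi using B(3) by (rule image_mono)
  qed (use indep c in auto)
  then show ?thesis
    unfolding fut_eq[OF assms(1) z assms(3)] code_dim_def using B(4) by simp
qed

lemma dim_mono: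
  assumes "S \<subseteq> T" "finite T"
  shows "code_dim (S :: (nat \<Rightarrow> 'a::field) set) \<le> code_dim T"
proof -
  obtain B where B: "B \<subseteq> T" "\<not> module.dependent cscale B" "T \<subseteq> module.span cscale B"
     "card B = vector_space.dim cscale T"
    using vector_space.basis_exists[OF vs, of T] by blast
  have "finite B" using B(1) assms(2) finite_subset by blast
  then have "vector_space.dim cscale S \<le> card B"
    using vector_space.dim_le_card[OF vs, of S B] B(3) assms(1) by blast
  then show ?thesis using B(4) by (simp add: code_dim_def)
qed

lemma dim_zero:
  assumes "S \<subseteq> {0}"
  shows "code_dim (S :: (nat \<Rightarrow> 'a::field) set) = 0"
proof -
  have "module.span cscale S = module.span cscale ({} :: (nat \<Rightarrow> 'a) set)"
    using module.span_minimal[OF md assms] module.subspace_single_0[OF md] module.span_zero[OF md, of S]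
      module.span_empty[OF md] by auto
  then have "vector_space.dim cscale S = vector_space.dim cscale ({} :: (nat \<Rightarrow> 'a) set)"
    by (metis vector_space.dim_span[OF vs])
  also have "\<dots> = 0"
    using vector_space.dim_eq_card_independent[OF vs] module.independent_empty[OF md] by fastforce
  finally show ?thesis by (simp add: code_dim_def)
qed

lemma fvec_finite: "finite (fvec n :: (nat \<Rightarrow> 'a::{zero,finite}) set)"
proof (induction n)
  case 0
  have "fvec 0 = {0 :: nat \<Rightarrow> 'a}" by (auto simp: fvec_def fun_eq_iff)
  then show ?case by simp
next
  case (Suc n)
  have "(fvec (Suc n) :: (nat \<Rightarrow> 'a) set) \<subseteq> (\<lambda>(a, v). v(n := a)) ` (UNIV \<times> fvec n)"
  proof
    fix v :: "nat \<Rightarrow> 'a" assume v: "v \<in> fvec (Suc n)"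
    have "v = (v(n := 0))(n := v n)" by simp
    have f: "v(n := 0) \<in> fvec n" using v by (auto simp: fvec_def)
    show "v \<in> (\<lambda>(a, v). v(n := a)) ` (UNIV \<times> fvec n)"
      by (rule image_eqI[where x="(v n, v(n:=0))"]) (use f in auto)
  qed
  then show ?case by (rule finite_subset) (use Suc in auto)
qed

lemma weight_eq: "hamming_dist n c 0 = card {j. j < n \<and> c j \<noteq> 0}"
  by (simp add: hamming_dist_def)

theorem proposition2p3:
  fixes C :: "(nat \<Rightarrow> 'a::{field,finite}) set" and n k d :: nat
  assumes "linear_code n C"
    and "C \<noteq> {0}"
    and "k = code_dim C"
    and "d = min_dist n C"
  shows "state_complexity n C =
           (if 2 * d \<ge> n + 2 then k
            else k - Min {Delta n C i | i. d - 1 \<le> i \<and> i \<le> n - d + 1})"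
proof -
  have Cf: "C \<subseteq> fvec n" and Cs: "Modules.module.subspace cscale C"
    using assms(1) by (auto simp: linear_code_def)
  have z: "0 \<in> C" using Cs by (simp add: module.subspace_def[OF md])
  have finC: "finite C" using fvec_finite Cf finite_subset by blast
  obtain c0 where c0: "c0 \<in> C" "c0 \<noteq> 0" using assms(2) z by blast
  define D where "D = {hamming_dist n x y | x y. x \<in> C \<and> y \<in> C \<and> x \<noteq> y}"
  have hd_le: "hamming_dist n x y \<le> n" for x y :: "nat \<Rightarrow> 'a"
  proof -
    have "{j. j < n \<and> x j \<noteq> y j} \<subseteq> {..<n}" by auto
    then show ?thesis unfolding hamming_dist_def using card_mono[of "{..<n}"] by fastforce
  qed
  have finD: "finite D"
  proof (rule finite_subset)
    show "D \<subseteq> {..n}" using hd_le by (auto simp: D_def)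
  qed simp
  have dmin: "d \<le> card {j. j < n \<and> c j \<noteq> 0}" if "c \<in> C" "c \<noteq> 0" for c
  proof -
    have "hamming_dist n c 0 \<in> D" unfolding D_def using that z by blast
    then have "Min D \<le> hamming_dist n c 0" using finD by (rule Min_le[rotated])
    then have "d \<le> hamming_dist n c 0" using assms(4) by (simp add: min_dist_def D_def)
    then show ?thesis by (simp add: weight_eq)
  qed
  have dn: "d \<le> n" using dmin[OF c0] hd_le[of c0 0] by (simp add: weight_eq)
  have d1: "1 \<le> d"
  proof -
    have "D \<noteq> {}" unfolding D_def using c0 z by blast
    then have "Min D \<in> D" using finD Min_in by blast
    then have "d \<in> D" using assms(4) by (simp add: min_dist_def D_def)
    then obtain x y where xy: "x \<in> C" "y \<in> C" "x \<noteq> y" "d = hamming_dist n x y" unfolding D_def by blast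
    then obtain j where j: "x j \<noteq> y j" by (auto simp: fun_eq_iff)
    have "x \<in> fvec n" "y \<in> fvec n" using xy(1,2) Cf by auto
    then have "j < n" using j unfolding fvec_def by (metis (mono_tags, lifting) mem_Collect_eq not_le)
    then have "{j. j < n \<and> x j \<noteq> y j} \<noteq> {}" using j by blast
    moreover have "finite {j. j < n \<and> x j \<noteq> y j}" by simp
    ultimately have "card {j. j < n \<and> x j \<noteq> y j} > 0" using card_gt_0_iff by blast
    then show ?thesis using xy(4) unfolding hamming_dist_def by simp
  qed
  have Pz: "PP C i \<subseteq> {0}" if "i < d" for i
  proof
    fix c assume c: "c \<in> PP C i"
    show "c \<in> {0}"
    proof (rule ccontr)
      assume "c \<notin> {0}"
      then have "d \<le> card {j. j < n \<and> c j \<noteq> 0}" using c dmin by (auto simp: PP_def)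
      moreover have "{j. j < n \<and> c j \<noteq> 0} \<subseteq> {..<i}" using c unfolding PP_def by (metis (mono_tags, lifting) lessThan_iff mem_Collect_eq not_le subsetI)
      then have "card {j. j < n \<and> c j \<noteq> 0} \<le> i" using card_mono[of "{..<i}"] by fastforce
      ultimately show False using that by linarith
    qed
  qed
  have Gz: "GG C i \<subseteq> {0}" if "n - d < i" for i
  proof
    fix c assume c: "c \<in> GG C i"
    show "c \<in> {0}"
    proof (rule ccontr)
      assume "c \<notin> {0}"
      then have "d \<le> card {j. j < n \<and> c j \<noteq> 0}" using c dmin by (auto simp: GG_def)
      moreover have "{j. j < n \<and> c j \<noteq> 0} \<subseteq> {i..<n}" using c unfolding GG_def by (metis (mono_tags, lifting) atLeastLessThan_iff mem_Collect_eq not_le subsetI)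
      then have "card {j. j < n \<and> c j \<noteq> 0} \<le> n - i" using card_mono[of "{i..<n}"] by fastforce
      ultimately show False using that dn d1 by linarith
    qed
  qed
  define Dl where "Dl i = code_dim (PP C i) + code_dim (GG C i)" for i
  have DD: "Delta n C i = Dl i" if "i \<le> n" for i
    unfolding Delta_def Dl_def past_eq[OF Cf z that] dim_fut[OF Cf Cs that] ..
  have GGf: "finite (GG C i)" for i using finC by (simp add: GG_def)
  have PPf: "finite (PP C i)" for i using finC by (simp add: PP_def)
  have Gmono: "code_dim (GG C j) \<le> code_dim (GG C i)" if "i \<le> j" for i j
    by (rule dim_mono[OF _ GGf]) (use that in \<open>auto simp: GG_def\<close>)
  have Pmono: "code_dim (PP C i) \<le> code_dim (PP C j)" if "i \<le> j" for i j
    by (rule dim_mono[OF _ PPf]) (use that in \<open>auto simp: PP_def\<close>)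
  have A: "{Delta n C i | i. i \<le> n} = Dl ` {..n}" using DD by force
  have finA: "finite (Dl ` {..n})" by simp
  have sc: "state_complexity n C = k - Min (Dl ` {..n})"
    unfolding state_complexity_def A assms(3) ..
  show ?thesis
  proof (cases "2 * d \<ge> n + 2")
    case True
    have lt: "n - d < d - 1" "d - 1 < d" using True d1 dn by linarith+
    have "Dl (d - 1) = 0"
      unfolding Dl_def using dim_zero[OF Pz[OF lt(2)]] dim_zero[OF Gz[OF lt(1)]] by simp
    moreover have "d - 1 \<in> {..n}" using dn by simp
    ultimately have "Min (Dl ` {..n}) = 0"
      by (metis Min_le finA image_eqI le_zero_eq)
    then show ?thesis using sc True by simp
  next
    case False
    have rng: "d - 1 \<le> n - d + 1" "n - d + 1 \<le> n" using False d1 dn by linarith+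
    have "{Delta n C i | i. d - 1 \<le> i \<and> i \<le> n - d + 1} = (\<lambda>i. Delta n C i) ` {d - 1..n - d + 1}"
      by auto
    also have "\<dots> = Dl ` {d - 1..n - d + 1}"
      by (rule image_cong) (use DD rng(2) in auto)
    finally have B: "{Delta n C i | i. d - 1 \<le> i \<and> i \<le> n - d + 1} = Dl ` {d - 1..n - d + 1}" .
    have finB: "finite (Dl ` {d - 1..n - d + 1})" by simp
    have neB: "Dl ` {d - 1..n - d + 1} \<noteq> {}" using rng by auto
    have sub: "Dl ` {d - 1..n - d + 1} \<subseteq> Dl ` {..n}" using rng by auto
    have le1: "Min (Dl ` {..n}) \<le> Min (Dl ` {d - 1..n - d + 1})"
      using Min_antimono[OF sub neB finA] .
    have ex: "\<exists>j \<in> {d - 1..n - d + 1}. Dl j \<le> Dl i" if "i \<le> n" for i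
    proof (cases "i < d - 1")
      case True
      have "Dl i = code_dim (GG C i)" unfolding Dl_def using dim_zero[OF Pz, of i] True by simp
      moreover have "Dl (d - 1) = code_dim (GG C (d - 1))"
        unfolding Dl_def using dim_zero[OF Pz, of "d - 1"] d1 by simp
      ultimately show ?thesis using Gmono[of i "d - 1"] True rng by force
    next
      case F1: False
      show ?thesis
      proof (cases "i > n - d + 1")
        case True
        have "Dl i = code_dim (PP C i)" unfolding Dl_def using dim_zero[OF Gz, of i] True by simp
        moreover have "Dl (n - d + 1) = code_dim (PP C (n - d + 1))"
          unfolding Dl_def using dim_zero[OF Gz, of "n - d + 1"] d1 dn by simp
        ultimately show ?thesis using Pmono[of "n - d + 1" i] True rng by force
      next
        case False
        then show ?thesis using F1 by force
      qed
    qed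
    have "Min (Dl ` {..n}) \<in> Dl ` {..n}" using finA Min_in by blast
    then obtain i where i: "i \<le> n" "Min (Dl ` {..n}) = Dl i" by (metis atMost_iff imageE)
    obtain j where j: "j \<in> {d - 1..n - d + 1}" "Dl j \<le> Dl i" using ex[OF i(1)] by blast
    have "Min (Dl ` {d - 1..n - d + 1}) \<le> Dl j" using finB j(1) by simp
    then have "Min (Dl ` {..n}) = Min (Dl ` {d - 1..n - d + 1})" using le1 i(2) j(2) by linarith
    then show ?thesis using sc False B by simp
  qed
qed

end
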